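(* Let $s\ge1$, $M=(p^s-1)/2$, and $1\le l\le g$. Put $\delta_l=(2g+1)M-lp^s$. With respect to the lexicographic order of monomials with $z_1>z_2>\dots>z_n$, the leading term of $I^{[lp^s-1]}_{p^s}(z)$ is $$(-1)^{\delta_l}\binom{M}{l}\Big(0,\dots,0,\tfrac{l}{M},1,\dots,1\Big)\,z_1^M\cdots z_{2g-2l}^M\,z_{2g-2l+1}^{M-l},$$ where in the vector the entry $0$ is repeated $2g-2l$ times, followed by $l/M$ (in position $2g-2l+1$), followed by $2l$ entries equal to $1$. (The vector $\binom Ml(0,\dots,0,l/M,1,\dots,1)$ has integer entries.)
   Context: Let $p$ be an odd prime, $g\ge1$, $n=2g+1$, with $p>n$; $z=(z_1,\dots,z_n)$. For a positive integer $r$ put $M_r=(p^r-1)/2$, $\Phi_{p^r}(x,z)=\prod_{i=1}^n(x-z_i)^{M_r}$, expand $\Big(\frac{\Phi_{p^r}}{x-z_1},\dots,\frac{\Phi_{p^r}}{x-z_n}\Big)=\sum_iP^i_{p^r}(z)x^i$ with $P^i_{p^r}(z)\in\mathbb Z[z]^n$, and set $I^{[lp^r-1]}_{p^r}(z)=P^{lp^r-1}_{p^r}(z)$. Leading term: for a nonzero (vector) polynomial $f(z)=\sum_d a_dz_1^{d_1}\cdots z_n^{d_n}$ (with $a_d$ scalars or vectors), its leading term is the nonzero summand $a_dz^d$ whose monomial $z^d$ is largest in the lexicographic order with $z_1>\dots>z_n$. *)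

theory Defs
  imports "HOL-Computational_Algebra.Polynomial" "HOL-Library.Poly_Mapping"
    "HOL-Computational_Algebra.Primes"
begin

text \<open>Multivariate integer polynomials in variables z_1, z_2, ... :
  maps from exponent vectors (finitely supported nat => nat, variable index => exponent)
  to integer coefficients, with convolution product.\<close>
type_synonym mpoly = "(nat \<Rightarrow>\<^sub>0 nat) \<Rightarrow>\<^sub>0 int"

definition zvar :: "nat \<Rightarrow> mpoly" where
  "zvar i = Poly_Mapping.single (Poly_Mapping.single i 1) 1"

definition Phi :: "nat \<Rightarrow> nat \<Rightarrow> mpoly poly" where
  "Phi n q = (\<Prod>i\<in>{1..n}. [:- zvar i, 1:] ^ ((q - 1) div 2))"

text \<open>Phi_q / (x - z_i), the exact quotient.\<close>
definition Phi_quot :: "nat \<Rightarrow> nat \<Rightarrow> nat \<Rightarrow> mpoly poly" where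
  "Phi_quot n q i = (\<Prod>j\<in>{1..n} - {i}. [:- zvar j, 1:] ^ ((q - 1) div 2))
                     * [:- zvar i, 1:] ^ ((q - 1) div 2 - 1)"

definition Pvec :: "nat \<Rightarrow> nat \<Rightarrow> nat \<Rightarrow> nat \<Rightarrow> mpoly" where
  "Pvec n q k i = coeff (Phi_quot n q i) k"

definition lex_less :: "(nat \<Rightarrow>\<^sub>0 nat) \<Rightarrow> (nat \<Rightarrow>\<^sub>0 nat) \<Rightarrow> bool" where
  "lex_less d e \<longleftrightarrow> (\<exists>k. (\<forall>j<k. Poly_Mapping.lookup d j = Poly_Mapping.lookup e j) \<and> Poly_Mapping.lookup d k < Poly_Mapping.lookup e k)"

definition leading_term ::
  "(nat \<Rightarrow> mpoly) \<Rightarrow> nat set \<Rightarrow> (nat \<Rightarrow> int) \<Rightarrow> (nat \<Rightarrow>\<^sub>0 nat) \<Rightarrow> bool" where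
  "leading_term f A c d \<longleftrightarrow>
     (\<exists>i\<in>A. c i \<noteq> 0) \<and>
     (\<forall>i\<in>A. Poly_Mapping.lookup (f i) d = c i) \<and>
     (\<forall>i\<in>A. \<forall>e. Poly_Mapping.lookup (f i) e \<noteq> 0 \<longrightarrow> e = d \<or> lex_less e d)"

end

theory Submission imports Defs begin
abbreviation lk where "lk \<equiv> Poly_Mapping.lookup"
abbreviation sg where "sg \<equiv> Poly_Mapping.single"

lemma zvar_power: "zvar j ^ t = sg (sg j t) 1"
proof (induction t)
  case 0 then show ?case by simp
next
  case (Suc t) then show ?case
    by (simp add: zvar_def mult_single add.commute flip: single_add)
qed

lemma coeff_L:
  "coeff ([:- zvar j, 1:] ^ m) t =
     (if t \<le> m then sg (sg j (m - t)) ((-1) ^ (m - t) * int (m choose t)) else 0)"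
proof (cases "t \<le> m")
  case True
  have "coeff ([:- zvar j, 1:] ^ m) t = of_nat (m choose t) * (- zvar j) ^ (m - t)"
    using coeff_linear_poly_power[OF True, of "- zvar j" 1] by simp
  also have "\<dots> = sg 0 (int (m choose t)) * (sg 0 ((-1) ^ (m - t)) * sg (sg j (m - t)) 1)"
  proof -
    have "(- zvar j) ^ (m - t) = (-1) ^ (m - t) * zvar j ^ (m - t)" by (rule power_minus)
    moreover have "((-1)::mpoly) ^ (m - t) = sg 0 ((-1) ^ (m - t))"
    proof -
      have "(of_int ((-1) ^ (m - t)) :: mpoly) = (-1) ^ (m - t)" by simp
      moreover have "sg 0 ((-1) ^ (m - t)) = (of_int ((-1) ^ (m - t)) :: mpoly)"
        using single_of_int[where 'b=int and 'a="nat \<Rightarrow>\<^sub>0 nat", of "(-1)^(m-t)"] by simp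
      ultimately show ?thesis by simp
    qed
    moreover have "(of_nat (m choose t) :: mpoly) = sg 0 (int (m choose t))"
      by simp
    ultimately show ?thesis by (simp only: zvar_power)
  qed
  also have "\<dots> = sg (sg j (m - t)) ((-1) ^ (m - t) * int (m choose t))"
    by (simp del: single_of_nat single_of_int add: mult_single mult.commute)
  finally show ?thesis using True by simp
next
  case False
  then have "degree ([:- zvar j, 1:] ^ m) < t"
    by (metis degree_linear_power not_le)
  then show ?thesis using False by (simp add: coeff_eq_0)
qed

definition Fc :: "nat set \<Rightarrow> (nat \<Rightarrow> nat) \<Rightarrow> nat \<Rightarrow> (nat \<Rightarrow>\<^sub>0 nat) \<Rightarrow> int" where
  "Fc A m k e = (if Poly_Mapping.keys e \<subseteq> A \<and> (\<forall>j\<in>A. lk e j \<le> m j) \<and>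
        (\<Sum>j\<in>A. lk e j) + k = (\<Sum>j\<in>A. m j)
     then (-1) ^ (\<Sum>j\<in>A. lk e j) * (\<Prod>j\<in>A. int (m j choose lk e j)) else 0)"

lemma lk_minus_single: "lk (e - sg j (lk e j)) x = (if x = j then 0 else lk e x)"
  by (simp add: lookup_minus lookup_single when_def)

lemma split_single: "t \<le> lk (e::nat \<Rightarrow>\<^sub>0 nat) j \<Longrightarrow> e = sg j t + (e - sg j t)"
  by (rule poly_mapping_eqI) (auto simp add: lookup_add lookup_minus lookup_single when_def)

lemma lookup_single_mult_gen:
  "lk (sg b c * (f::mpoly)) e = c * Sum_any (\<lambda>q. lk f q when e = b + q)"
  unfolding lookup_mult lookup_single
  by (simp only: when_mult Sum_any_when_equal')
lemma lookup_single_mult1: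
  "lk (sg b c * (f::mpoly)) (b + a) = c * lk f a"
  unfolding lookup_single_mult_gen by simp
lemma lookup_single_mult0:
  fixes f :: mpoly
  assumes "\<And>a. e \<noteq> b + a" shows "lk (sg b c * f) e = 0"
proof -
  have "\<And>q. (lk f q when e = b + q) = 0" using assms by (simp add: when_def)
  then show ?thesis unfolding lookup_single_mult_gen by simp
qed

lemma coeff_prod:
  "finite A \<Longrightarrow> lk (coeff (\<Prod>j\<in>A. [:- zvar j, 1:] ^ m j) k) e = Fc A m k e"
proof (induction A arbitrary: k e rule: finite_induct)
  case empty
  show ?case by (auto simp: Fc_def lookup_one when_def coeff_1)
next
  case (insert j A)
  define L where "L = [:- zvar j, 1:] ^ m j"
  define P where "P = (\<Prod>j\<in>A. [:- zvar j, 1:] ^ m j)"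
  define ej where "ej = lk e j"
  define e2 where "e2 = e - sg j ej"
  have lk_e2: "lk e2 x = (if x = j then 0 else lk e x)" for x
    unfolding e2_def ej_def by (rule lk_minus_single)
  have IH: "lk (coeff P k') e' = Fc A m k' e'" for k' e'
    unfolding P_def by (rule insert.IH)
  have s1: "lk (coeff (\<Prod>j\<in>insert j A. [:- zvar j, 1:] ^ m j) k) e
      = (\<Sum>i\<le>k. lk (coeff L i * coeff P (k-i)) e)"
    using insert.hyps by (simp add: coeff_mult lookup_sum L_def P_def)
  have tm: "lk (coeff L i * coeff P (k-i)) e =
      (if i = m j - ej \<and> ej \<le> m j then (-1)^ej * int (m j choose ej) * Fc A m (k-i) e2 else 0)"
    for i
  proof (cases "i \<le> m j")
    case False
    then show ?thesis by (auto simp add: L_def coeff_L)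
  next
    case True
    define c where "c = ((-1::int) ^ (m j - i) * int (m j choose i))"
    have cL: "coeff L i = sg (sg j (m j - i)) c" using True by (simp add: L_def coeff_L c_def)
    show ?thesis
    proof (cases "m j - i \<le> ej")
      case True2: True
      have "e = sg j (m j - i) + (e - sg j (m j - i))"
        using True2 unfolding ej_def by (rule split_single)
      then have "lk (coeff L i * coeff P (k-i)) e = c * Fc A m (k-i) (e - sg j (m j - i))"
        unfolding cL by (metis lookup_single_mult1 IH)
      also have "\<dots> = (if i = m j - ej \<and> ej \<le> m j then (-1)^ej * int (m j choose ej) * Fc A m (k-i) e2 else 0)"
      proof (cases "i = m j - ej \<and> ej \<le> m j")
        case True3: True
        then have "m j - i = ej" by simp
        moreover have "m j choose i = m j choose ej"
          using True3 binomial_symmetric[of ej "m j"] by simp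
        ultimately show ?thesis using True3 by (simp add: c_def e2_def)
      next
        case False3: False
        then have "ej > m j - i" using True True2 by auto
        then have "lk (e - sg j (m j - i)) j \<noteq> 0"
          by (simp add: lookup_minus ej_def)
        then have "j \<in> Poly_Mapping.keys (e - sg j (m j - i))" by (simp add: in_keys_iff)
        then have "Fc A m (k-i) (e - sg j (m j - i)) = 0"
          using insert.hyps(2) by (auto simp: Fc_def)
        then show ?thesis by (subst if_not_P[OF False3]) simp
      qed
      finally show ?thesis .
    next
      case False2: False
      have "\<And>a. e \<noteq> sg j (m j - i) + a"
      proof
        fix a assume "e = sg j (m j - i) + a"
        then have "lk e j = (m j - i) + lk a j" by (simp add: lookup_add)
        then show False using False2 unfolding ej_def by simp
      qed
      then have "lk (coeff L i * coeff P (k-i)) e = 0"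
        unfolding cL by (rule lookup_single_mult0)
      then show ?thesis using False2 by auto
    qed
  qed
  have s2: "(\<Sum>i\<le>k. lk (coeff L i * coeff P (k-i)) e) =
      (if m j - ej \<le> k \<and> ej \<le> m j then (-1)^ej * int (m j choose ej) * Fc A m (k - (m j - ej)) e2 else 0)"
    unfolding tm by (cases "ej \<le> m j") (simp_all add: sum.delta sum.delta')
  have keq: "Poly_Mapping.keys e \<subseteq> insert j A \<longleftrightarrow> Poly_Mapping.keys e2 \<subseteq> A"
  proof
    assume H: "Poly_Mapping.keys e \<subseteq> insert j A"
    show "Poly_Mapping.keys e2 \<subseteq> A"
    proof
      fix x assume "x \<in> Poly_Mapping.keys e2"
      then have "x \<noteq> j \<and> x \<in> Poly_Mapping.keys e"
        by (auto simp: in_keys_iff lk_e2 split: if_splits)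
      then show "x \<in> A" using H by auto
    qed
  next
    assume H: "Poly_Mapping.keys e2 \<subseteq> A"
    show "Poly_Mapping.keys e \<subseteq> insert j A"
    proof
      fix x assume "x \<in> Poly_Mapping.keys e"
      then have "x = j \<or> x \<in> Poly_Mapping.keys e2" by (auto simp: in_keys_iff lk_e2)
      then show "x \<in> insert j A" using H by auto
    qed
  qed
  have sumeq: "(\<Sum>x\<in>A. lk e2 x) = (\<Sum>x\<in>A. lk e x)"
    using insert.hyps(2) by (intro sum.cong) (auto simp: lk_e2)
  have prodeq: "(\<Prod>x\<in>A. int (m x choose lk e2 x)) = (\<Prod>x\<in>A. int (m x choose lk e x))"
    using insert.hyps(2) by (intro prod.cong) (auto simp: lk_e2)
  have alleq: "(\<forall>x\<in>A. lk e2 x \<le> m x) \<longleftrightarrow> (\<forall>x\<in>A. lk e x \<le> m x)"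
    using insert.hyps(2) by (auto simp: lk_e2)
  have sumins: "(\<Sum>x\<in>insert j A. lk e x) = ej + (\<Sum>x\<in>A. lk e x)"
    using insert.hyps by (simp add: ej_def)
  have sumins_m: "(\<Sum>x\<in>insert j A. m x) = m j + (\<Sum>x\<in>A. m x)"
    using insert.hyps by simp
  have prodins: "(\<Prod>x\<in>insert j A. int (m x choose lk e x)) = int (m j choose ej) * (\<Prod>x\<in>A. int (m x choose lk e x))"
    using insert.hyps by (simp add: ej_def)
  have sle: "(\<forall>x\<in>A. lk e x \<le> m x) \<Longrightarrow> (\<Sum>x\<in>A. lk e x) \<le> (\<Sum>x\<in>A. m x)"
    by (rule sum_mono) auto
  have rhs: "Fc (insert j A) m k e =
      (if m j - ej \<le> k \<and> ej \<le> m j then (-1)^ej * int (m j choose ej) * Fc A m (k - (m j - ej)) e2 else 0)"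
  proof (cases "m j - ej \<le> k \<and> ej \<le> m j")
    case True
    have c: "((\<Sum>x\<in>A. lk e x) + (k - (m j - ej)) = (\<Sum>x\<in>A. m x)) \<longleftrightarrow>
             (ej + (\<Sum>x\<in>A. lk e x) + k = m j + (\<Sum>x\<in>A. m x))"
      using True by auto
    have a: "(\<forall>x\<in>insert j A. lk e x \<le> m x) \<longleftrightarrow> (\<forall>x\<in>A. lk e x \<le> m x)"
      using True by (auto simp: ej_def)
    show ?thesis using True
      unfolding Fc_def keq sumeq prodeq alleq sumins sumins_m prodins a c
      by (simp add: power_add)
  next
    case False
    have "\<not> (Poly_Mapping.keys e \<subseteq> insert j A \<and> (\<forall>x\<in>insert j A. lk e x \<le> m x) \<and>
        (\<Sum>x\<in>insert j A. lk e x) + k = (\<Sum>x\<in>insert j A. m x))"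
    proof
      assume H: "Poly_Mapping.keys e \<subseteq> insert j A \<and> (\<forall>x\<in>insert j A. lk e x \<le> m x) \<and>
        (\<Sum>x\<in>insert j A. lk e x) + k = (\<Sum>x\<in>insert j A. m x)"
      then have "ej \<le> m j" by (simp add: ej_def)
      moreover have "(\<Sum>x\<in>A. lk e x) \<le> (\<Sum>x\<in>A. m x)" using H sle by simp
      ultimately show False using H False unfolding sumins sumins_m by linarith
    qed
    then have "Fc (insert j A) m k e = 0" unfolding Fc_def by (rule if_not_P)
    then show ?thesis by (subst if_not_P[OF False]) simp
  qed
  show ?case unfolding s1 s2 rhs ..
qed

lemma Phi_quot_prod:
  assumes "i \<in> {1..n}"
  shows "Phi_quot n q i = (\<Prod>j\<in>{1..n}. [:- zvar j, 1:] ^ (if j = i then (q - 1) div 2 - 1 else (q - 1) div 2))"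
proof -
  have "(\<Prod>j\<in>{1..n}. [:- zvar j, 1:] ^ (if j = i then (q - 1) div 2 - 1 else (q - 1) div 2))
     = [:- zvar i, 1:] ^ ((q - 1) div 2 - 1) *
       (\<Prod>j\<in>{1..n} - {i}. [:- zvar j, 1:] ^ (if j = i then (q - 1) div 2 - 1 else (q - 1) div 2))"
    using assms by (subst prod.remove[of _ i]) auto
  also have "(\<Prod>j\<in>{1..n} - {i}. [:- zvar j, 1:] ^ (if j = i then (q - 1) div 2 - 1 else (q - 1) div 2))
      = (\<Prod>j\<in>{1..n} - {i}. [:- zvar j, 1:] ^ ((q - 1) div 2))"
    by (rule prod.cong) auto
  finally show ?thesis unfolding Phi_quot_def by (simp add: mult.commute)
qed

lemma greedy:
  fixes e d :: "nat \<Rightarrow> nat"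
  assumes ez: "\<And>j. j \<notin> {1..n} \<Longrightarrow> e j = 0" and dz: "\<And>j. j \<notin> {1..n} \<Longrightarrow> d j = 0"
    and eM: "\<And>j. j \<in> {1..n} \<Longrightarrow> e j \<le> M"
    and dM: "\<And>j. 1 \<le> j \<Longrightarrow> j \<le> a \<Longrightarrow> d j = M"
    and d0: "\<And>j. j > a + 1 \<Longrightarrow> d j = 0"
    and an: "a < n" and sums: "sum e {1..n} = sum d {1..n}" and ne: "e \<noteq> d"
  shows "\<exists>t. (\<forall>j<t. e j = d j) \<and> e t < d t"
proof -
  have ex: "\<exists>t. e t \<noteq> d t" using ne by auto
  define t where "t = (LEAST t. e t \<noteq> d t)"
  have t1: "e t \<noteq> d t" unfolding t_def using ex by (rule LeastI_ex)
  have t2: "\<forall>j<t. e j = d j" unfolding t_def using not_less_Least by blast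
  show ?thesis
  proof (cases "e t < d t")
    case True then show ?thesis using t2 by blast
  next
    case False
    then have gt: "d t < e t" using t1 by simp
    have tS: "t \<in> {1..n}" using gt ez dz by (metis less_nat_zero_code)
    have ta: "t > a" proof (rule ccontr)
      assume "\<not> a < t" then have "d t = M" using tS by (intro dM) auto
      then show False using gt eM[OF tS] by simp
    qed
    have split: "{1..n} = {1..<t} \<union> {t} \<union> {t<..n}" using tS by auto
    have fin: "finite {1..<t}" "finite {t<..n}" by auto
    have sd: "sum d {1..n} = sum d {1..<t} + d t + sum d {t<..n}"
      unfolding split by (subst sum.union_disjoint, auto)+
    have se: "sum e {1..n} = sum e {1..<t} + e t + sum e {t<..n}"
      unfolding split by (subst sum.union_disjoint, auto)+
    have "sum d {t<..n} = 0" using d0 ta by (intro sum.neutral) auto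
    moreover have "sum d {1..<t} = sum e {1..<t}" using t2 by (intro sum.cong) auto
    ultimately show ?thesis using sd se gt sums by linarith
  qed
qed

theorem lemma7p2:
  fixes p g s l :: nat
  assumes "prime p" and "odd p" and "g \<ge> 1" and "p > 2 * g + 1"
    and "s \<ge> 1" and "1 \<le> l" and "l \<le> g"
  defines "n \<equiv> 2 * g + 1"
    and "M \<equiv> (p ^ s - 1) div 2"
  defines "\<delta> \<equiv> int n * int M - int l * int (p ^ s)"
  shows "\<exists>c :: nat \<Rightarrow> int.
     leading_term (Pvec n (p ^ s) (l * p ^ s - 1)) {1..n} c
       (Abs_poly_mapping (\<lambda>j. if 1 \<le> j \<and> j \<le> 2 * g - 2 * l then M
                               else if j = 2 * g - 2 * l + 1 then M - l else 0))
     \<and> (\<forall>i\<in>{1..n}. of_int (c i) =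
          (-1 :: rat) powi \<delta> * of_nat (M choose l) *
          (if i \<le> 2 * g - 2 * l then 0
           else if i = 2 * g - 2 * l + 1 then of_nat l / of_nat M else 1))"
proof -
  define q where "q = p ^ s"
  define k where "k = l * q - 1"
  define a where "a = 2 * g - 2 * l"
  define f where "f j = (if 1 \<le> j \<and> j \<le> 2 * g - 2 * l then M else if j = 2 * g - 2 * l + 1 then M - l else 0)" for j
  define d where "d = Abs_poly_mapping f"
  define mi where "mi i j = (if j = i then (q - 1) div 2 - 1 else (q - 1) div 2)" for i j :: nat
  have Mq: "M = (q - 1) div 2" unfolding M_def q_def ..
  have mi_eq: "mi i j = (if j = i then M - 1 else M)" for i j unfolding mi_def Mq ..
  have qodd: "odd q" unfolding q_def using assms(2) by simp
  have q2: "q = 2 * M + 1" using qodd unfolding Mq by (auto elim!: oddE)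
  have pq: "p \<le> q" unfolding q_def using assms(5) prime_gt_1_nat[OF assms(1)]
    by (simp add: self_le_power)
  have p3: "p \<ge> 2 * g + 3" using assms(2) assms(4) by presburger
  have lM: "l < M" using p3 pq q2 assms(7) by linarith
  have n_eq: "n = a + 2 * l + 1" unfolding n_def a_def using assms(7) by simp
  have fin_f: "finite {j. f j \<noteq> 0}"
    by (rule finite_subset[of _ "{..a+1}"]) (auto simp: f_def a_def split: if_splits)
  have lkd: "lk d = f" unfolding d_def using fin_f by (simp add: lookup_Abs_poly_mapping)
  have f_out: "f j = 0" if "j \<notin> {1..n}" for j
  proof -
    have "j = 0 \<or> j > 2 * g + 1" using that unfolding n_def by auto
    moreover have "2 * g - 2 * l + 1 \<le> 2 * g + 1" by simp
    ultimately show ?thesis unfolding f_def by auto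
  qed
  have keysd: "Poly_Mapping.keys d \<subseteq> {1..n}"
  proof
    fix x assume "x \<in> Poly_Mapping.keys d"
    then have "f x \<noteq> 0" by (simp add: in_keys_iff lkd)
    then show "x \<in> {1..n}" using f_out[of x] by argo
  qed
  have Pv: "lk (Pvec n q k i) e = Fc {1..n} (mi i) k e" if "i \<in> {1..n}" for i e
    unfolding Pvec_def Phi_quot_prod[OF that] mi_def by (rule coeff_prod) simp
  have summi: "sum (mi i) {1..n} = n * M - 1" if "i \<in> {1..n}" for i
  proof -
    have "sum (mi i) {1..n} = mi i i + sum (mi i) ({1..n} - {i})"
      using that by (simp add: sum.remove)
    also have "sum (mi i) ({1..n} - {i}) = (n - 1) * M"
      using that by (simp add: mi_def Mq)
    moreover have "mi i i = M - 1" unfolding mi_def Mq by simp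
    moreover have "M - 1 + (n - 1) * M = n * M - 1"
    proof -
      obtain n' where "n = Suc n'" unfolding n_def by simp
      moreover obtain M' where "M = Suc M'" using lM by (cases M) auto
      ultimately show ?thesis by simp
    qed
    ultimately show ?thesis by simp
  qed
  have sumf: "sum f {1..n} = a * M + (M - l)"
  proof -
    have "sum f {1..n} = f (a+1) + sum f ({1..n} - {a+1})"
      using n_eq by (intro sum.remove) auto
    also have "sum f ({1..n} - {a+1}) = sum (\<lambda>_. M) {1..a}"
      by (rule sum.mono_neutral_cong_right) (auto simp: f_def a_def n_eq)
    finally show ?thesis by (simp add: f_def a_def)
  qed
  have keq: "sum f {1..n} + k = n * M - 1"
  proof -
    have "l * q \<ge> 1" using assms(6) q2 by simp
    then have "int (sum f {1..n} + k) = int a * M + M - l + l * (2 * M + 1) - 1"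
      unfolding sumf k_def q2 using lM by (simp add: of_nat_diff)
    also have "\<dots> = int (n * M - 1)"
      unfolding n_eq using lM by (simp add: of_nat_diff algebra_simps)
    finally show ?thesis by linarith
  qed
  have M1: "M \<ge> 1" using lM assms(6) by simp
  have c_val: "Fc {1..n} (mi i) k d =
      (if i \<le> a then 0 else (-1)^(a*M + (M-l)) * int (mi i (a+1) choose (M - l)))"
    if iS: "i \<in> {1..n}" for i
  proof (cases "i \<le> a")
    case True
    then have "\<not> (f i \<le> mi i i)" using iS M1 unfolding f_def mi_eq a_def by auto
    then have "\<not> (\<forall>j\<in>{1..n}. lk d j \<le> mi i j)" using iS lkd by auto
    then show ?thesis using True unfolding Fc_def by auto
  next
    case False
    have le: "\<forall>j\<in>{1..n}. lk d j \<le> mi i j"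
      using False lM assms(6) unfolding lkd f_def mi_eq a_def by auto
    have sm: "(\<Sum>j\<in>{1..n}. lk d j) + k = (\<Sum>j\<in>{1..n}. mi i j)"
      unfolding lkd keq summi[OF iS] ..
    have pr: "(\<Prod>j\<in>{1..n}. int (mi i j choose lk d j)) = int (mi i (a+1) choose (M - l))"
    proof -
      have "(\<Prod>j\<in>{1..n}. int (mi i j choose lk d j)) =
          int (mi i (a+1) choose lk d (a+1)) * (\<Prod>j\<in>{1..n} - {a+1}. int (mi i j choose lk d j))"
        using n_eq by (intro prod.remove) auto
      also have "(\<Prod>j\<in>{1..n} - {a+1}. int (mi i j choose lk d j)) = 1"
        using False by (intro prod.neutral) (auto simp: lkd f_def mi_eq a_def)
      finally show ?thesis by (simp add: lkd f_def a_def)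
    qed
    show ?thesis using False keysd le sm pr unfolding Fc_def lkd sumf by simp
  qed
  define c where "c i = Fc {1..n} (mi i) k d" for i
  have d_eq: "Abs_poly_mapping (\<lambda>j. if 1 \<le> j \<and> j \<le> 2 * g - 2 * l then M
                               else if j = 2 * g - 2 * l + 1 then M - l else 0) = d"
    unfolding d_def f_def ..
  have part1: "leading_term (Pvec n q k) {1..n} c d"
    unfolding leading_term_def
  proof (intro conjI)
    have nS: "n \<in> {1..n}" unfolding n_def by simp
    have "\<not> n \<le> a" using n_eq assms(6) by simp
    moreover have "mi n (a+1) = M" using n_eq assms(6) unfolding mi_def Mq by simp
    ultimately have "c n = (-1)^(a*M + (M-l)) * int (M choose (M - l))"
      unfolding c_def using c_val[OF nS] by simp
    moreover have "(M choose (M - l)) \<noteq> 0" by simp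
    ultimately have "c n \<noteq> 0" by simp
    then show "\<exists>i\<in>{1..n}. c i \<noteq> 0" using nS by blast
  next
    show "\<forall>i\<in>{1..n}. lk (Pvec n q k i) d = c i" unfolding c_def using Pv by simp
  next
    show "\<forall>i\<in>{1..n}. \<forall>e. lk (Pvec n q k i) e \<noteq> 0 \<longrightarrow> e = d \<or> lex_less e d"
    proof (intro ballI allI impI)
      fix i e assume iS: "i \<in> {1..n}" and nz: "lk (Pvec n q k i) e \<noteq> 0"
      then have "Fc {1..n} (mi i) k e \<noteq> 0" using Pv by simp
      then have "Poly_Mapping.keys e \<subseteq> {1..n} \<and> (\<forall>j\<in>{1..n}. lk e j \<le> mi i j) \<and>
          (\<Sum>j\<in>{1..n}. lk e j) + k = (\<Sum>j\<in>{1..n}. mi i j)"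
        unfolding Fc_def by (rule contrapos_np) (rule if_not_P)
      then have H: "Poly_Mapping.keys e \<subseteq> {1..n}" "\<forall>j\<in>{1..n}. lk e j \<le> mi i j"
          "(\<Sum>j\<in>{1..n}. lk e j) + k = (\<Sum>j\<in>{1..n}. mi i j)" by blast+
      show "e = d \<or> lex_less e d"
      proof (cases "lk e = f")
        case True
        have "e = d" by (rule poly_mapping_eqI) (simp add: True lkd)
        then show ?thesis by simp
      next
        case False
        have "\<exists>t. (\<forall>j<t. lk e j = f j) \<and> lk e t < f t"
        proof (rule greedy[where n=n and M=M and a=a and e="lk e" and d=f])
          show "lk e j = 0" if "j \<notin> {1..n}" for j
          proof (rule ccontr)
            assume "lk e j \<noteq> 0"
            then have "j \<in> Poly_Mapping.keys e" by (simp add: in_keys_iff)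
            then show False using H(1) that by blast
          qed
          show "f j = 0" if "j \<notin> {1..n}" for j using f_out that .
          show "lk e j \<le> M" if "j \<in> {1..n}" for j
          proof -
            have "lk e j \<le> mi i j" using H(2) that by blast
            moreover have "mi i j \<le> M" by (simp add: mi_eq)
            ultimately show ?thesis by linarith
          qed
          show "f j = M" if "1 \<le> j" "j \<le> a" for j using that unfolding f_def a_def by simp
          show "f j = 0" if "j > a + 1" for j using that unfolding f_def a_def by simp
          show "a < n" using n_eq by simp
          show "sum (lk e) {1..n} = sum f {1..n}" using H(3) keq summi[OF iS] by linarith
          show "lk e \<noteq> f" using False .
        qed
        then show ?thesis unfolding lex_less_def lkd by blast
      qed
    qed
  qed
  define N where "N = a * M + (M - l)"
  have delta: "\<delta> = int N"
  proof -
    have "\<delta> = int n * int M - int l * int q" unfolding \<delta>_def q_def ..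
    also have "\<dots> = int N" unfolding N_def n_eq q2 using lM by (simp add: of_nat_diff algebra_simps)
    finally show ?thesis .
  qed
  have pw: "(-1 :: rat) powi \<delta> = (-1) ^ N" unfolding delta by simp
  have Mpos: "(of_nat M :: rat) \<noteq> 0" using lM by simp
  have absorb: "l * (M choose l) = M * ((M - 1) choose (l - 1))"
    using assms(6) by (intro times_binomial_minus1_eq) simp
  have sym1: "(M - 1) choose (M - l) = (M - 1) choose (l - 1)"
  proof -
    have "(M - 1) choose (l - 1) = (M - 1) choose ((M - 1) - (l - 1))"
      using lM by (intro binomial_symmetric) simp
    moreover have "(M - 1) - (l - 1) = M - l" using assms(6) lM by simp
    ultimately show ?thesis by simp
  qed
  have sym2: "M choose (M - l) = M choose l"
    using lM binomial_symmetric[of l M] by simp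
  have part2: "\<forall>i\<in>{1..n}. of_int (c i) =
          (-1 :: rat) powi \<delta> * of_nat (M choose l) *
          (if i \<le> 2 * g - 2 * l then 0
           else if i = 2 * g - 2 * l + 1 then of_nat l / of_nat M else 1)"
  proof
    fix i assume iS: "i \<in> {1..n}"
    have ci: "c i = (if i \<le> a then 0 else (-1)^N * int (mi i (a+1) choose (M - l)))"
      unfolding c_def N_def using c_val[OF iS] .
    show "of_int (c i) =
          (-1 :: rat) powi \<delta> * of_nat (M choose l) *
          (if i \<le> 2 * g - 2 * l then 0
           else if i = 2 * g - 2 * l + 1 then of_nat l / of_nat M else 1)"
    proof (cases "i \<le> a")
      case True then show ?thesis using ci by (simp add: a_def pw)
    next
      case False
      show ?thesis
      proof (cases "i = a + 1")
        case True
        then have "mi i (a+1) = M - 1" by (simp add: mi_eq)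
        then have "c i = (-1)^N * int ((M - 1) choose (l - 1))" using ci False sym1 by simp
        moreover have "(of_nat (M choose l) :: rat) * (of_nat l / of_nat M) = of_nat ((M - 1) choose (l - 1))"
        proof -
          have "(of_nat (M choose l) :: rat) * of_nat l = of_nat M * of_nat ((M - 1) choose (l - 1))"
            using absorb by (metis mult.commute of_nat_mult)
          then show ?thesis using Mpos by (simp add: field_simps)
        qed
        ultimately show ?thesis using False True by (simp add: a_def pw) (metis mult.assoc times_divide_eq_right)
      next
        case False2: False
        then have "mi i (a+1) = M" using False by (simp add: mi_eq)
        then have "c i = (-1)^N * int (M choose l)" using ci False sym2 by simp
        then show ?thesis using False False2 by (simp add: a_def pw)
      qed
    qed
  qed
  show ?thesis
  proof (intro exI[of _ c] conjI)
    show "leading_term (Pvec n (p ^ s) (l * p ^ s - 1)) {1..n} c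
       (Abs_poly_mapping (\<lambda>j. if 1 \<le> j \<and> j \<le> 2 * g - 2 * l then M
                               else if j = 2 * g - 2 * l + 1 then M - l else 0))"
      unfolding d_eq using part1 unfolding q_def k_def .
    show "\<forall>i\<in>{1..n}. of_int (c i) =
          (-1 :: rat) powi \<delta> * of_nat (M choose l) *
          (if i \<le> 2 * g - 2 * l then 0
           else if i = 2 * g - 2 * l + 1 then of_nat l / of_nat M else 1)" by (rule part2)
  qed
qed
end
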